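(* Consider an execution of the MBA protocol (described in the context) with $n\ge 3t+1$ players of which at most $t$ are malicious. If, for some component $c\in\{1,\dots,m\}$, the honest players obtain $b_c=0$ in the common bit vector $\mathbf b$ output by STEP 3, then the honest players reach $c$-agreement on a value $v\neq\bot$ in the $c$-th component of their MBA outputs.
   Context: Network model: $n$ players; every pair joined by a direct private channel; synchronous steps, instantaneous delivery; at most $t$ malicious players, honest players follow the protocol and send the same message to everyone. $\#_i^s(v,c)$ is the number of distinct players from which $i$ received in step $s$ a valid vector message whose $c$-th component is $v$ (counting its own; conflicting messages from one sender discarded, duplicates once). $c$-agreement on outputs: all honest players have the same $c$-th output component. MGC (two steps): STEP 1: each $i$ sends its initial vector $\mathbf{v}_i'\in(V\cup\{\bot\})^m$. STEP 2: each $i$ sends $\tilde{\mathbf v}_i$ with $\tilde v_{i,c}=v$ if $\#_i^1(v,c)\ge\lfloor\frac{2n}3\rfloor+1$, else $\bot$. Output: $(v_{i,c},g_{i,c})=(x,2)$ if $\#_i^2(x,c)\ge\lfloor\frac{2n}3\rfloor+1$ for some $x\ne\bot$; else $(x,1)$ if $\#_i^2(x,c)\ge\lfloor\frac n3\rfloor+1$ for some $x\ne\bot$; else $(\bot,0)$. MBBA (on bit vectors $\mathbf b_i\in\{0,1\}^m$; $\mathbf f_i$ initially zero; $H$ a random oracle, $\mathrm{SIG}_i$ unique signatures, $r$ common random string, counter $\gamma=0$): EXIT CHECK: if $\mathbf f_i$ is all ones, send $\mathbf b_i$ as final (reused by receivers in later steps), output $\mathbf b_i$, halt. STEP 1: send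 $\mathbf b_i$; for $c$ with $f_{i,c}=0$: if $\#_i^1(0,c)>\frac23n$ set $b_{i,c}=0,f_{i,c}=1$ and EXIT CHECK; else if $\#_i^1(1,c)>\frac23n$ set $b_{i,c}=1$; else $0$. STEP 2: send $\mathbf b_i$; for $c$ with $f_{i,c}=0$: if $\#_i^2(1,c)>\frac23n$ set $b_{i,c}=1,f_{i,c}=1$ and EXIT CHECK; else if $\#_i^2(0,c)>\frac23n$ set $0$; else $1$. STEP 3: send $\mathrm{SIG}_i(r\|\gamma)$ and $\mathbf b_i$; for $c$ with $f_{i,c}=0$: if $\#_i^3(0,c)>\frac23n$ set 0; else if $\#_i^3(1,c)>\frac23n$ set 1; else set $b_{i,c}$ to the $c$-th bit of $H(\min_{j\in P_i}H(\mathrm{SIG}_j(r\|\gamma)))$, $P_i$ the senders of valid STEP 3 messages to $i$; $\gamma\leftarrow\gamma+1$, go to STEP 1. MBA: each player $i$ has initial vector $\mathbf v_i'\in(V\cup\{\bot\})^m$. STEPS 1–2: run the two steps of MGC, obtaining $(\mathbf v_i,\mathbf g_i)$. STEP 3: run MBBA with initial bits $b_{i,c}=0$ if $g_{i,c}=2$ and $b_{i,c}=1$ otherwise; its output $\mathbf b$ is the output of STEP 3. OUTPUT: $o_{i,c}=v_{i,c}$ if $b_{c}=0$ and $o_{i,c}=\bot$ if $b_{c}=1$. *)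

theory Defs
  imports Main "HOL.Real"
begin

text \<open>Players have type 'p; the set of all players is P (n = card P), the honest
  players form Hon.  Vectors are functions nat => _, components are c < m.
  The value bottom is None.  Bits are bool (False = 0, True = 1).
  A received message of sender j (in a given step, at a given receiver) is
  an option: None = nothing valid received (nothing sent, or conflicting
  messages discarded); Some x = the unique valid message x.\<close>

definition cnt :: "'p set \<Rightarrow> ('p \<Rightarrow> (nat \<Rightarrow> 'a) option) \<Rightarrow> 'a \<Rightarrow> nat \<Rightarrow> nat" where
  "cnt P recv v c = card {j \<in> P. \<exists>x. recv j = Some x \<and> x c = v}"

text \<open>MGC STEP 2 vector component of a player, from its STEP 1 receptions.\<close>
definition mgc_tilde :: "'p set \<Rightarrow> ('p \<Rightarrow> (nat \<Rightarrow> 'v option) option) \<Rightarrow> nat \<Rightarrow> 'v option" where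
  "mgc_tilde P recv c =
     (if \<exists>v. cnt P recv v c \<ge> 2 * card P div 3 + 1
      then (SOME v. cnt P recv v c \<ge> 2 * card P div 3 + 1) else None)"

text \<open>MGC output rule for component c (relational, since the value x with grade 1
  need not be unique a priori).\<close>
definition mgc_out_ok :: "'p set \<Rightarrow> ('p \<Rightarrow> (nat \<Rightarrow> 'v option) option) \<Rightarrow> nat \<Rightarrow> 'v option \<Rightarrow> nat \<Rightarrow> bool" where
  "mgc_out_ok P recv c x g =
     (if \<exists>y. y \<noteq> None \<and> cnt P recv y c \<ge> 2 * card P div 3 + 1
      then g = 2 \<and> x \<noteq> None \<and> cnt P recv x c \<ge> 2 * card P div 3 + 1
      else if \<exists>y. y \<noteq> None \<and> cnt P recv y c \<ge> card P div 3 + 1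
      then g = 1 \<and> x \<noteq> None \<and> cnt P recv x c \<ge> card P div 3 + 1
      else x = None \<and> g = 0)"

text \<open>One MBBA step (global step number k; k mod 3 = 0,1,2 is STEP 1,2,3) of a
  non-halted honest player with vectors b, f; N v c is the count #(v,c) received
  in this step; coin c is the coin bit used in STEP 3 for component c.\<close>
definition mbba_update :: "nat \<Rightarrow> nat \<Rightarrow> nat \<Rightarrow> (bool \<Rightarrow> nat \<Rightarrow> nat) \<Rightarrow> (nat \<Rightarrow> bool)
    \<Rightarrow> (nat \<Rightarrow> bool) \<Rightarrow> (nat \<Rightarrow> bool) \<Rightarrow> (nat \<Rightarrow> bool) \<times> (nat \<Rightarrow> bool)" where
  "mbba_update k n m N coin b f =
    (let big = (\<lambda>v c. real (N v c) > 2 / 3 * real n) in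
     if k mod 3 = 0 then
       ((\<lambda>c. if c < m \<and> \<not> f c then (if big False c then False else if big True c then True else False) else b c),
        (\<lambda>c. f c \<or> (c < m \<and> big False c)))
     else if k mod 3 = 1 then
       ((\<lambda>c. if c < m \<and> \<not> f c then (if big True c then True else if big False c then False else True) else b c),
        (\<lambda>c. f c \<or> (c < m \<and> big True c)))
     else
       ((\<lambda>c. if c < m \<and> \<not> f c then (if big False c then False else if big True c then True else coin c) else b c),
        f))"

text \<open>An execution of MBA.
  vinit j: initial vector; M1 j i, M2 j i: what i validly received from j in MGC
  steps 1, 2; vout i, gout i: MGC outputs; M k j i: what i validly received from j
  in MBBA step k; B k i, F k i, Hlt k i: bit vector, flag vector and halted status
  of player i before MBBA step k; coin k i c: the STEP 3 coin bit of i in step k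
  (left arbitrary).  Malicious players' messages are unconstrained.
  A halted player keeps sending its final vector (receivers reuse it).\<close>
definition mba_execution ::
  "'p set \<Rightarrow> 'p set \<Rightarrow> nat \<Rightarrow> nat \<Rightarrow> ('p \<Rightarrow> nat \<Rightarrow> 'v option)
   \<Rightarrow> ('p \<Rightarrow> 'p \<Rightarrow> (nat \<Rightarrow> 'v option) option) \<Rightarrow> ('p \<Rightarrow> 'p \<Rightarrow> (nat \<Rightarrow> 'v option) option)
   \<Rightarrow> ('p \<Rightarrow> nat \<Rightarrow> 'v option) \<Rightarrow> ('p \<Rightarrow> nat \<Rightarrow> nat)
   \<Rightarrow> (nat \<Rightarrow> 'p \<Rightarrow> 'p \<Rightarrow> (nat \<Rightarrow> bool) option) \<Rightarrow> (nat \<Rightarrow> 'p \<Rightarrow> nat \<Rightarrow> bool)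
   \<Rightarrow> (nat \<Rightarrow> 'p \<Rightarrow> nat \<Rightarrow> bool) \<Rightarrow> (nat \<Rightarrow> 'p \<Rightarrow> nat \<Rightarrow> bool) \<Rightarrow> (nat \<Rightarrow> 'p \<Rightarrow> bool) \<Rightarrow> bool" where
  "mba_execution P Hon t m vinit M1 M2 vout gout M coin B F Hlt \<longleftrightarrow>
     finite P \<and> Hon \<subseteq> P \<and> card (P - Hon) \<le> t \<and>
     (\<forall>j\<in>Hon. \<forall>i\<in>P. M1 j i = Some (vinit j)) \<and>
     (\<forall>j\<in>Hon. \<forall>i\<in>P. M2 j i = Some (mgc_tilde P (\<lambda>j'. M1 j' j))) \<and>
     (\<forall>i\<in>Hon. \<forall>c. mgc_out_ok P (\<lambda>j. M2 j i) c (vout i c) (gout i c)) \<and>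
     (\<forall>i\<in>Hon. B 0 i = (\<lambda>c. gout i c \<noteq> 2) \<and> F 0 i = (\<lambda>c. False) \<and> \<not> Hlt 0 i) \<and>
     (\<forall>k. \<forall>j\<in>Hon. \<forall>i\<in>P. M k j i = Some (B k j)) \<and>
     (\<forall>k. \<forall>i\<in>Hon.
        (if Hlt k i
         then B (Suc k) i = B k i \<and> F (Suc k) i = F k i \<and> Hlt (Suc k) i
         else (B (Suc k) i, F (Suc k) i) =
                mbba_update k (card P) m (\<lambda>v c. cnt P (\<lambda>j. M k j i) v c) (coin k i) (B k i) (F k i)
              \<and> Hlt (Suc k) i = (k mod 3 \<noteq> 2 \<and> (\<forall>c<m. F (Suc k) i c))))"

end

theory Submission
  imports Defs
begin

lemma cnt_split:
  assumes "finite P" "Hon \<subseteq> P" "card (P - Hon) \<le> t"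
  shows "card {j\<in>P. Q j} \<le> card {j\<in>Hon. Q j} + t"
    and "card {j\<in>Hon. Q j} \<le> card {j\<in>P. Q j}"
proof -
  have "{j\<in>P. Q j} \<subseteq> {j\<in>Hon. Q j} \<union> (P - Hon)" using assms by auto
  hence "card {j\<in>P. Q j} \<le> card ({j\<in>Hon. Q j} \<union> (P - Hon))"
    using assms by (intro card_mono) (auto intro: finite_subset)
  also have "\<dots> \<le> card {j\<in>Hon. Q j} + card (P - Hon)" by (rule card_Un_le)
  finally show "card {j\<in>P. Q j} \<le> card {j\<in>Hon. Q j} + t" using assms by linarith
  show "card {j\<in>Hon. Q j} \<le> card {j\<in>P. Q j}" using assms by (intro card_mono) auto
qed

lemma halt_stable:
  assumes exec: "mba_execution P Hon t m vinit M1 M2 vout gout M coin B F Hlt"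
    and i: "i \<in> Hon" and h: "Hlt k i"
  shows "Hlt (k + d) i \<and> B (k + d) i = B k i"
proof (induction d)
  case 0 then show ?case using h by simp
next
  case (Suc d)
  then show ?case using exec i unfolding mba_execution_def
    by (metis add_Suc_right)
qed

lemma validity:
  assumes exec: "mba_execution P Hon t m vinit M1 M2 vout gout M coin B F Hlt"
    and n_ge: "card P \<ge> 3 * t + 1"
    and all1: "\<forall>i\<in>Hon. B 0 i c"
  shows "\<forall>i\<in>Hon. B k i c"
proof (induction k)
  case 0 then show ?case using all1 by simp
next
  case (Suc k)
  have fin: "finite P" and sub: "Hon \<subseteq> P" and tb: "card (P - Hon) \<le> t"
    using exec unfolding mba_execution_def by auto
  have Mk: "\<forall>j\<in>Hon. \<forall>i\<in>P. M k j i = Some (B k j)"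
    using exec unfolding mba_execution_def by auto
  have cardP: "card P = card Hon + card (P - Hon)"
    using fin sub by (metis card_Diff_subset card_mono add_diff_inverse_nat not_less finite_subset)
  show ?case
  proof
    fix i assume i: "i \<in> Hon"
    hence iP: "i \<in> P" using sub by auto
    define N where "N = (\<lambda>v c. cnt P (\<lambda>j. M k j i) v c)"
    have hF: "{j\<in>Hon. \<exists>x. M k j i = Some x \<and> x c = False} = {}"
      using Mk Suc.IH iP by auto
    have hT: "{j\<in>Hon. \<exists>x. M k j i = Some x \<and> x c = True} = Hon"
      using Mk Suc.IH iP by auto
    have NF: "N False c \<le> t"
    proof -
      have "card {j\<in>P. \<exists>x. M k j i = Some x \<and> x c = False} \<le> card {j\<in>Hon. \<exists>x. M k j i = Some x \<and> x c = False} + t"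
        by (rule cnt_split(1)[OF fin sub tb])
      then show ?thesis unfolding hF N_def cnt_def by simp
    qed
    have NT: "N True c \<ge> card Hon"
      using cnt_split(2)[OF fin sub tb, of "\<lambda>j. \<exists>x. M k j i = Some x \<and> x c = True"] hT
      unfolding N_def cnt_def by simp
    have bF: "\<not> real (N False c) > 2 / 3 * real (card P)"
      using NF n_ge by linarith
    have bT: "real (N True c) > 2 / 3 * real (card P)"
      using NT n_ge cardP tb by linarith
    have step: "if Hlt k i
         then B (Suc k) i = B k i \<and> F (Suc k) i = F k i \<and> Hlt (Suc k) i
         else (B (Suc k) i, F (Suc k) i) =
                mbba_update k (card P) m N (coin k i) (B k i) (F k i)
              \<and> Hlt (Suc k) i = (k mod 3 \<noteq> 2 \<and> (\<forall>c<m. F (Suc k) i c))"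
      using exec i unfolding mba_execution_def N_def by blast
    show "B (Suc k) i c"
    proof (cases "Hlt k i")
      case True then show ?thesis using step Suc.IH i by simp
    next
      case False
      hence "B (Suc k) i = fst (mbba_update k (card P) m N (coin k i) (B k i) (F k i))"
        using step by (metis fst_conv)
      then show ?thesis using bF bT Suc.IH i
        unfolding mbba_update_def Let_def by auto
    qed
  qed
qed


lemma step1_unique:
  assumes exec: "mba_execution P Hon t m vinit M1 M2 vout gout M coin B F Hlt"
    and n_ge: "card P \<ge> 3 * t + 1"
    and j: "j \<in> Hon" and j': "j' \<in> Hon"
    and cv: "cnt P (\<lambda>x. M1 x j) v c \<ge> 2 * card P div 3 + 1"
    and cw: "cnt P (\<lambda>x. M1 x j') w c \<ge> 2 * card P div 3 + 1"
  shows "v = w"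
proof (rule ccontr)
  assume ne: "v \<noteq> w"
  have fin: "finite P" and sub: "Hon \<subseteq> P" and tb: "card (P - Hon) \<le> t"
    and M1h: "\<forall>j\<in>Hon. \<forall>i\<in>P. M1 j i = Some (vinit j)"
    using exec unfolding mba_execution_def by auto
  define Sv where "Sv = {x\<in>P. \<exists>y. M1 x j = Some y \<and> y c = v}"
  define Sw where "Sw = {x\<in>P. \<exists>y. M1 x j' = Some y \<and> y c = w}"
  have jP: "j \<in> P" "j' \<in> P" using j j' sub by auto
  have "Sv \<inter> Sw \<subseteq> P - Hon" using ne M1h jP unfolding Sv_def Sw_def by auto
  hence i1: "card (Sv \<inter> Sw) \<le> t" using tb fin by (meson card_mono finite_Diff le_trans)
  have i2: "card (Sv \<union> Sw) \<le> card P" using fin by (intro card_mono) (auto simp: Sv_def Sw_def)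
  have fs: "finite Sv" "finite Sw" using fin by (auto simp: Sv_def Sw_def)
  have "card Sv + card Sw = card (Sv \<union> Sw) + card (Sv \<inter> Sw)"
    using card_Un_Int[OF fs] .
  moreover have "card Sv \<ge> 2 * card P div 3 + 1" "card Sw \<ge> 2 * card P div 3 + 1"
    using cv cw unfolding Sv_def Sw_def cnt_def by auto
  ultimately show False using i1 i2 n_ge by linarith
qed

lemma tilde_prop:
  "mgc_tilde P recv c = None \<or> cnt P recv (mgc_tilde P recv c) c \<ge> 2 * card P div 3 + 1"
  unfolding mgc_tilde_def by (auto intro: someI_ex)

theorem lemma4:
  fixes P Hon :: "'p set" and t m c :: nat
  assumes exec: "mba_execution P Hon t m vinit M1 M2 vout gout M coin B F Hlt"
    and n_ge: "card P \<ge> 3 * t + 1"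
    and c_lt: "c < m"
    and b0: "\<forall>i\<in>Hon. \<exists>k. Hlt k i \<and> \<not> B k i c"
  shows "\<exists>v. v \<noteq> None \<and>
           (\<forall>i\<in>Hon. \<forall>k. Hlt k i \<longrightarrow> (if B k i c then None else vout i c) = v)"
proof (cases "Hon = {}")
  case True then show ?thesis by auto
next
  case False
  then obtain i0 where i0: "i0 \<in> Hon" by auto
  have fin: "finite P" and sub: "Hon \<subseteq> P" and tb: "card (P - Hon) \<le> t"
    and M2h: "\<forall>j\<in>Hon. \<forall>i\<in>P. M2 j i = Some (mgc_tilde P (\<lambda>j'. M1 j' j))"
    and outh: "\<forall>i\<in>Hon. \<forall>c. mgc_out_ok P (\<lambda>j. M2 j i) c (vout i c) (gout i c)"
    and B0: "\<forall>i\<in>Hon. B 0 i = (\<lambda>c. gout i c \<noteq> 2)"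
    using exec unfolding mba_execution_def by auto
  define T where "T = (\<lambda>j. mgc_tilde P (\<lambda>j'. M1 j' j) c)"
  have Tu: "T j1 = T j2" if "j1 \<in> Hon" "j2 \<in> Hon" "T j1 \<noteq> None" "T j2 \<noteq> None" for j1 j2
    using step1_unique[OF exec n_ge that(1,2)] tilde_prop[of P "\<lambda>j'. M1 j' j1" c]
      tilde_prop[of P "\<lambda>j'. M1 j' j2" c] that(3,4) unfolding T_def by metis
  have supp: "{j\<in>Hon. \<exists>x. M2 j i = Some x \<and> x c = y} = {j\<in>Hon. T j = y}" if "i \<in> P" for i y
    using M2h that unfolding T_def by auto
  obtain k0 where "Hlt k0 i0" "\<not> B k0 i0 c" using b0 i0 by auto
  then obtain j0 where j0: "j0 \<in> Hon" "\<not> B 0 j0 c"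
    using validity[OF exec n_ge, of c k0] i0 by auto
  have g2: "gout j0 c = 2" using j0 B0 by auto
  define x where "x = vout j0 c"
  have j0P: "j0 \<in> P" using j0 sub by auto
  have ok0: "mgc_out_ok P (\<lambda>j. M2 j j0) c x (gout j0 c)" using outh j0 x_def by auto
  have xN: "x \<noteq> None" and cx: "cnt P (\<lambda>j. M2 j j0) x c \<ge> 2 * card P div 3 + 1"
    using ok0 g2 unfolding mgc_out_ok_def by (auto split: if_splits)
  have hx: "card {j\<in>Hon. T j = x} + t \<ge> 2 * card P div 3 + 1"
    using cx cnt_split(1)[OF fin sub tb, of "\<lambda>j. \<exists>z. M2 j j0 = Some z \<and> z c = x"] supp[OF j0P, of x]
    unfolding cnt_def by simp
  have n3: "card P div 3 \<ge> t" using n_ge by linarith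
  have hx2: "card {j\<in>Hon. T j = x} \<ge> card P div 3 + 1" using hx n3 by linarith
  hence "{j\<in>Hon. T j = x} \<noteq> {}" by (metis card.empty not_one_le_zero add_is_0 le_zero_eq one_neq_zero)
  then obtain j1 where j1: "j1 \<in> Hon" "T j1 = x" by auto
  have onlyx: "{j\<in>Hon. T j = y} = {}" if "y \<noteq> None" "y \<noteq> x" for y
  proof -
    have "T j \<noteq> y" if "j \<in> Hon" for j
      using Tu[OF that j1(1)] j1(2) xN \<open>y \<noteq> None\<close> \<open>y \<noteq> x\<close> by metis
    then show ?thesis by auto
  qed
  have cnt_i: "cnt P (\<lambda>j. M2 j i) x c \<ge> card P div 3 + 1"
    and cnt_y: "\<And>y. y \<noteq> None \<Longrightarrow> y \<noteq> x \<Longrightarrow> cnt P (\<lambda>j. M2 j i) y c \<le> t"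
    if "i \<in> Hon" for i
  proof -
    have iP: "i \<in> P" using that sub by auto
    show "cnt P (\<lambda>j. M2 j i) x c \<ge> card P div 3 + 1"
      using hx2 cnt_split(2)[OF fin sub tb, of "\<lambda>j. \<exists>z. M2 j i = Some z \<and> z c = x"] supp[OF iP, of x]
      unfolding cnt_def by simp
    fix y assume "y \<noteq> None" "y \<noteq> x"
    then show "cnt P (\<lambda>j. M2 j i) y c \<le> t"
      using cnt_split(1)[OF fin sub tb, of "\<lambda>j. \<exists>z. M2 j i = Some z \<and> z c = y"] supp[OF iP, of y]
        onlyx[of y] unfolding cnt_def by simp
  qed
  have vout_eq: "vout i c = x" if i: "i \<in> Hon" for i
  proof -
    have ok: "mgc_out_ok P (\<lambda>j. M2 j i) c (vout i c) (gout i c)" using outh i by auto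
    have "2 * card P div 3 + 1 > t" "card P div 3 + 1 > t" using n3 by linarith+
    then show ?thesis using ok cnt_i[OF i] cnt_y[OF i] xN unfolding mgc_out_ok_def
      by (smt (verit) not_le order_trans)
  qed
  show ?thesis
  proof (intro exI conjI ballI allI impI)
    show "x \<noteq> None" by fact
    fix i k assume i: "i \<in> Hon" and h: "Hlt k i"
    obtain k' where k': "Hlt k' i" "\<not> B k' i c" using b0 i by auto
    have "B (k + k') i = B k i" "B (k' + k) i = B k' i"
      using halt_stable[OF exec i h, of k'] halt_stable[OF exec i k'(1), of k] by auto
    hence "\<not> B k i c" using k' by (simp add: add.commute)
    then show "(if B k i c then None else vout i c) = x" using vout_eq[OF i] by simp
  qed
qed

end
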